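(* Let $G$ be a connected (finite, simple) graph, $\mathcal{F}$ a maximum induced forest of $G$, $S=V(G)\setminus V(\mathcal{F})$, $H$ the contracted graph, and $B$ a skeleton of $H$ with the maximum possible number of 2-edges among all skeletons (all as defined in the context). Let $L_S$ be the set of vertices of $S$ that are leaves of $B$. Then for every vertex in $L_S$, the unique edge of $B$ incident to it is a 2-edge.
   Context: A maximum induced forest of $G$ is an induced forest of $G$ with the maximum number of vertices. Let $\mathcal{T}$ be the set of connected components (trees) of $\mathcal{F}$ and $S=V(G)\setminus V(\mathcal{F})$. The graph $H$ has vertex set $\{x_T : T\in\mathcal{T}\}\cup S$ (the $x_T$ are called tree vertices, the vertices of $S$ non-tree vertices) and edge set consisting of all edges of $G[S]$ together with all pairs $ux_T$ with $u\in S$, $T\in\mathcal{T}$ such that $u$ has at least one neighbor in $V(T)$ in $G$. An edge $ux_T$ of $H$ is a 2-edge if $u$ has at least two neighbors in $V(T)$ in $G$; all other edges of $H$ (including all edges with both endpoints in $S$) are 1-edges. A skeleton is a spanning tree of $H$ rooted at some tree vertex, with all edges directed towards the root (an in-arborescence). A leaf of $B$ is a vertex of total degree 1 in $B$. *)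

theory Defs
  imports Main
begin

definition restr :: "'a set \<Rightarrow> ('a \<Rightarrow> 'a \<Rightarrow> bool) \<Rightarrow> 'a \<Rightarrow> 'a \<Rightarrow> bool" where
  "restr V E = (\<lambda>x y. x \<in> V \<and> y \<in> V \<and> E x y)"

definition connected_graph :: "'a set \<Rightarrow> ('a \<Rightarrow> 'a \<Rightarrow> bool) \<Rightarrow> bool" where
  "connected_graph V E \<longleftrightarrow> V \<noteq> {} \<and> (\<forall>x\<in>V. \<forall>y\<in>V. (restr V E)\<^sup>*\<^sup>* x y)"

definition has_cycle :: "'a set \<Rightarrow> ('a \<Rightarrow> 'a \<Rightarrow> bool) \<Rightarrow> bool" where
  "has_cycle V E \<longleftrightarrow> (\<exists>cs. length cs \<ge> 3 \<and> distinct cs \<and> set cs \<subseteq> V \<and>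
      (\<forall>i < length cs. E (cs ! i) (cs ! ((i + 1) mod length cs))))"

definition forest :: "'a set \<Rightarrow> ('a \<Rightarrow> 'a \<Rightarrow> bool) \<Rightarrow> bool" where
  "forest V E \<longleftrightarrow> \<not> has_cycle V E"

definition is_tree :: "'a set \<Rightarrow> ('a \<Rightarrow> 'a \<Rightarrow> bool) \<Rightarrow> bool" where
  "is_tree V E \<longleftrightarrow> connected_graph V E \<and> forest V E"

definition components :: "'a set \<Rightarrow> ('a \<Rightarrow> 'a \<Rightarrow> bool) \<Rightarrow> 'a set set" where
  "components V E = {{y \<in> V. (restr V E)\<^sup>*\<^sup>* x y} | x. x \<in> V}"

definition max_induced_forest :: "'a set \<Rightarrow> ('a \<Rightarrow> 'a \<Rightarrow> bool) \<Rightarrow> 'a set \<Rightarrow> bool" where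
  "max_induced_forest V E F \<longleftrightarrow> F \<subseteq> V \<and> forest F E \<and>
     (\<forall>F'. F' \<subseteq> V \<and> forest F' E \<longrightarrow> card F' \<le> card F)"

text \<open>The contracted graph H: tree vertices are Inl T (T a component of G[F]),
  non-tree vertices are Inr u (u in S = V - F). Edges are unordered pairs.\<close>

definition H_verts :: "'a set \<Rightarrow> ('a \<Rightarrow> 'a \<Rightarrow> bool) \<Rightarrow> 'a set \<Rightarrow> ('a set + 'a) set" where
  "H_verts V E F = Inl ` components F E \<union> Inr ` (V - F)"

definition H_edges :: "'a set \<Rightarrow> ('a \<Rightarrow> 'a \<Rightarrow> bool) \<Rightarrow> 'a set \<Rightarrow> ('a set + 'a) set set" where
  "H_edges V E F =
     {{Inr u, Inr v} | u v. u \<in> V - F \<and> v \<in> V - F \<and> E u v} \<union>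
     {{Inr u, Inl T} | u T. u \<in> V - F \<and> T \<in> components F E \<and> (\<exists>w\<in>T. E u w)}"

definition two_edges :: "'a set \<Rightarrow> ('a \<Rightarrow> 'a \<Rightarrow> bool) \<Rightarrow> 'a set \<Rightarrow> ('a set + 'a) set set" where
  "two_edges V E F =
     {{Inr u, Inl T} | u T. u \<in> V - F \<and> T \<in> components F E \<and> card {w \<in> T. E u w} \<ge> 2}"

text \<open>A skeleton: spanning tree B of H (set of edges of H) with root r a tree vertex;
  the in-arborescence orientation towards r is determined by (r, B).\<close>
definition skeleton :: "'a set \<Rightarrow> ('a \<Rightarrow> 'a \<Rightarrow> bool) \<Rightarrow> 'a set \<Rightarrow> ('a set + 'a) \<Rightarrow> ('a set + 'a) set set \<Rightarrow> bool" where
  "skeleton V E F r B \<longleftrightarrow> r \<in> Inl ` components F E \<and> B \<subseteq> H_edges V E F \<and>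
     is_tree (H_verts V E F) (\<lambda>x y. {x, y} \<in> B)"

definition leaf :: "'b set set \<Rightarrow> 'b \<Rightarrow> bool" where
  "leaf B x \<longleftrightarrow> card {e \<in> B. x \<in> e} = 1"

end

theory Submission
  imports Defs
begin

lemma cyc_idx:
  fixes n i :: nat
  assumes "3 \<le> n" "i < n"
  shows "(i+1) mod n \<noteq> (i+n-1) mod n" "(i+1) mod n \<noteq> i" "(i+n-1) mod n \<noteq> i"
    "((i+n-1) mod n + 1) mod n = i" "(i+n-1) mod n < n" "(i+1) mod n < n"
proof -
  have p: "(i+1) mod n = (if i = n - 1 then 0 else i+1)"
    using assms by (auto simp: mod_if)
  have q: "(i+n-1) mod n = (if i = 0 then n - 1 else i - 1)"
  proof (cases "i = 0")
    case True then show ?thesis using assms by simp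
  next
    case False
    then have "i + n - 1 = (i - 1) + n" by simp
    then have "(i+n-1) mod n = (i - 1) mod n" by simp
    also have "\<dots> = i - 1" using assms by simp
    finally show ?thesis using False by simp
  qed
  show "(i+1) mod n \<noteq> (i+n-1) mod n" "(i+1) mod n \<noteq> i" "(i+n-1) mod n \<noteq> i"
    "((i+n-1) mod n + 1) mod n = i" "(i+n-1) mod n < n" "(i+1) mod n < n"
    using assms unfolding p q by auto
qed

lemma cyc_path:
  assumes d: "distinct cs" and n: "length cs = n" "3 \<le> n" and i: "i < n" "cs ! i = u"
    and adj: "\<forall>j < n. E (cs ! j) (cs ! ((j + 1) mod n))"
    and sub: "set cs \<subseteq> insert u F"
  shows "(restr F E)\<^sup>*\<^sup>* (cs ! ((i+1) mod n)) (cs ! ((i+n-1) mod n))"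
proof -
  have inF: "cs ! ((i+1+j) mod n) \<in> F" if "j + 2 \<le> n" for j
  proof -
    have k: "(i+1+j) mod n < n" using n by simp
    have "(i+1+j) mod n \<noteq> i"
    proof (cases "i+1+j < n")
      case True then show ?thesis by simp
    next
      case False
      then have "(i+1+j) mod n = (i+1+j-n) mod n" by (simp add: le_mod_geq)
      also have "\<dots> = i+1+j-n" using that i by simp
      finally have "(i+1+j) mod n = i+1+j-n" .
      then show ?thesis using that False by simp
    qed
    then have "cs ! ((i+1+j) mod n) \<noteq> u" using d k i n nth_eq_iff_index_eq[OF d, of "(i+1+j) mod n" i] by auto
    moreover have "cs ! ((i+1+j) mod n) \<in> set cs" using k n by simp
    ultimately show ?thesis using sub by auto
  qed
  have all: "\<forall>j. j + 2 \<le> n \<longrightarrow> (restr F E)\<^sup>*\<^sup>* (cs ! ((i+1) mod n)) (cs ! ((i+1+j) mod n))"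
  proof (intro allI)
    fix j show "j + 2 \<le> n \<longrightarrow> (restr F E)\<^sup>*\<^sup>* (cs ! ((i+1) mod n)) (cs ! ((i+1+j) mod n))"
    proof (induction j)
      case 0 then show ?case by simp
    next
      case (Suc j)
      show ?case
      proof
        assume a: "Suc j + 2 \<le> n"
        have e: "E (cs ! ((i+1+j) mod n)) (cs ! (((i+1+j) mod n + 1) mod n))"
          using adj n by simp
        have "((i+1+j) mod n + 1) mod n = (i+1+Suc j) mod n" by (simp add: mod_Suc_eq)
        then have "restr F E (cs ! ((i+1+j) mod n)) (cs ! ((i+1+Suc j) mod n))"
          using e inF[of j] inF[of "Suc j"] a unfolding restr_def by auto
        then show "(restr F E)\<^sup>*\<^sup>* (cs ! ((i+1) mod n)) (cs ! ((i+1+Suc j) mod n))"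
          using Suc a by simp
      qed
    qed
  qed
  have "(restr F E)\<^sup>*\<^sup>* (cs ! ((i+1) mod n)) (cs ! ((i+1+(n-2)) mod n))"
    using n by (intro mp[OF spec[OF all, of "n-2"]]) simp
  moreover have "i+1+(n-2) = i+n-1" using n by simp
  ultimately show ?thesis by metis
qed

lemma leaf_walk:
  assumes uq: "\<And>e'. e' \<in> B \<Longrightarrow> c \<in> e' \<Longrightarrow> e' = {c,w}"
    and w: "w \<in> HV" "w \<noteq> c"
    and p: "(restr HV (\<lambda>x y. {x,y} \<in> B))\<^sup>*\<^sup>* x y" and x: "x \<noteq> c"
  shows "(restr (HV - {c}) (\<lambda>x y. {x,y} \<in> B - {{c,w}}))\<^sup>*\<^sup>* x (if y = c then w else y)"
  using p
proof (induction rule: rtranclp_induct)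
  case base then show ?case using x by simp
next
  case (step z y)
  show ?case
  proof (cases "y = c")
    case True
    then have "{z,c} = {c,w}" using uq step(2) unfolding restr_def by auto
    then have "z = w \<or> z = c" by (auto simp: doubleton_eq_iff)
    then show ?thesis using step(3) True by auto
  next
    case yc: False
    show ?thesis
    proof (cases "z = c")
      case True
      then have "{c,y} = {c,w}" using uq step(2) unfolding restr_def by auto
      then have "y = w" using yc by (auto simp: doubleton_eq_iff)
      then show ?thesis using step(3) True yc by auto
    next
      case False
      then have "restr (HV - {c}) (\<lambda>x y. {x,y} \<in> B - {{c,w}}) z y"
        using step(2) yc unfolding restr_def by (auto simp: doubleton_eq_iff)
      then show ?thesis using step(3) False yc by auto
    qed
  qed
qed

lemma tree_swap:
  assumes t: "is_tree HV (\<lambda>x y. {x,y} \<in> B)" and c: "c \<in> HV" and w: "w \<in> HV" "w \<noteq> c"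
    and tt: "t \<in> HV" "t \<noteq> c"
    and uq: "\<And>e'. e' \<in> B \<Longrightarrow> c \<in> e' \<Longrightarrow> e' = {c,w}"
  shows "is_tree HV (\<lambda>x y. {x,y} \<in> insert {c,t} (B - {{c,w}}))"
proof -
  let ?R = "restr (HV - {c}) (\<lambda>x y. {x,y} \<in> B - {{c,w}})"
  let ?R' = "restr HV (\<lambda>x y. {x,y} \<in> insert {c,t} (B - {{c,w}}))"
  have con: "HV \<noteq> {}" "\<forall>x\<in>HV. \<forall>y\<in>HV. (restr HV (\<lambda>x y. {x,y}\<in>B))\<^sup>*\<^sup>* x y"
    using t unfolding is_tree_def connected_graph_def by auto
  have nc: "\<not> has_cycle HV (\<lambda>x y. {x,y}\<in>B)" using t unfolding is_tree_def forest_def by auto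
  have mono: "?R'\<^sup>*\<^sup>* x y" if "?R\<^sup>*\<^sup>* x y" for x y
    using that
  proof (induction rule: rtranclp_induct)
    case base then show ?case by simp
  next
    case (step y z)
    then have "?R' y z" by (auto simp: restr_def)
    then show ?case using step(3) by simp
  qed
  have toT: "?R'\<^sup>*\<^sup>* x t \<and> ?R'\<^sup>*\<^sup>* t x" if "x \<in> HV" for x
  proof (cases "x = c")
    case True
    have "?R' c t" "?R' t c" using c tt by (auto simp: restr_def insert_commute)
    then show ?thesis using True by auto
  next
    case False
    have "?R\<^sup>*\<^sup>* x (if t = c then w else t)"
      using leaf_walk[OF uq w con(2)[rule_format, OF that tt(1)] False] .
    hence "?R\<^sup>*\<^sup>* x t" using tt by simp
    moreover have "?R\<^sup>*\<^sup>* t (if x = c then w else x)"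
      using leaf_walk[OF uq w con(2)[rule_format, OF tt(1) that] tt(2)] .
    hence "?R\<^sup>*\<^sup>* t x" using False by simp
    ultimately show ?thesis using mono by blast
  qed
  have "connected_graph HV (\<lambda>x y. {x,y} \<in> insert {c,t} (B - {{c,w}}))"
    unfolding connected_graph_def using con(1) toT by (meson rtranclp_trans)
  moreover have "\<not> has_cycle HV (\<lambda>x y. {x,y} \<in> insert {c,t} (B - {{c,w}}))"
  proof
    assume "has_cycle HV (\<lambda>x y. {x,y} \<in> insert {c,t} (B - {{c,w}}))"
    then obtain cs where cs: "length cs \<ge> 3" "distinct cs" "set cs \<subseteq> HV"
      "\<forall>i<length cs. {cs!i, cs!((i+1) mod length cs)} \<in> insert {c,t} (B - {{c,w}})"
      unfolding has_cycle_def by blast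
    define n where "n = length cs"
    show False
    proof (cases "c \<in> set cs")
      case False
      have "\<forall>i<length cs. {cs!i, cs!((i+1) mod length cs)} \<in> B"
      proof (intro allI impI)
        fix i assume i: "i < length cs"
        then have lp: "0 < length cs" by linarith
        have "cs ! i \<in> set cs" using i by simp
        moreover have "cs!((i+1) mod length cs) \<in> set cs"
          by (rule nth_mem) (rule mod_less_divisor[OF lp])
        ultimately have "c \<notin> {cs!i, cs!((i+1) mod length cs)}" using False by auto
        then show "{cs!i, cs!((i+1) mod length cs)} \<in> B" using cs(4) i by auto
      qed
      then show False using nc cs unfolding has_cycle_def by blast
    next
      case True
      then obtain i where i: "i < n" "cs ! i = c" by (auto simp: in_set_conv_nth n_def)
      have key: "x = t" if "{c,x} \<in> insert {c,t} (B - {{c,w}})" "x \<noteq> c" for x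
        using that uq[of "{c,x}"] by (auto simp: doubleton_eq_iff)
      have n3: "3 \<le> n" using cs n_def by simp
      note ix = cyc_idx[OF n3 i(1)]
      have d: "cs ! a \<noteq> cs ! b" if "a < n" "b < n" "a \<noteq> b" for a b
        using that cs(2) nth_eq_iff_index_eq[OF cs(2), of a b] n_def by auto
      have "cs ! ((i+1) mod n) \<noteq> c" using d[of "(i+1) mod n" i] ix i by auto
      moreover have "{c, cs ! ((i+1) mod n)} \<in> insert {c,t} (B - {{c,w}})"
        using cs(4) i n_def by auto
      ultimately have a1: "cs ! ((i+1) mod n) = t" using key by blast
      have "cs ! ((i+n-1) mod n) \<noteq> c" using d[of "(i+n-1) mod n" i] ix i by auto
      moreover have "{cs ! ((i+n-1) mod n), cs ! (((i+n-1) mod n + 1) mod n)} \<in> insert {c,t} (B - {{c,w}})"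
        using cs(4) ix(5) n_def by blast
      then have "{c, cs ! ((i+n-1) mod n)} \<in> insert {c,t} (B - {{c,w}})"
        using ix(4) i by (simp add: insert_commute)
      ultimately have a2: "cs ! ((i+n-1) mod n) = t" using key by blast
      show False using d[OF ix(6) ix(5) ix(1)] a1 a2 by simp
    qed
  qed
  ultimately show ?thesis unfolding is_tree_def forest_def by simp
qed

theorem corollary2:
  fixes V :: "'a set" and E :: "'a \<Rightarrow> 'a \<Rightarrow> bool"
    and F :: "'a set" and r :: "'a set + 'a" and B :: "('a set + 'a) set set"
  assumes "finite V"
    and "\<And>x y. E x y \<Longrightarrow> x \<in> V \<and> y \<in> V"
    and "\<And>x y. E x y \<Longrightarrow> E y x"
    and "\<And>x. \<not> E x x"
    and "connected_graph V E"
    and "max_induced_forest V E F"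
    and "skeleton V E F r B"
    and "\<And>r' B'. skeleton V E F r' B' \<Longrightarrow>
           card (B' \<inter> two_edges V E F) \<le> card (B \<inter> two_edges V E F)"
  shows "\<forall>u \<in> V - F. leaf B (Inr u) \<longrightarrow> (\<forall>e \<in> B. Inr u \<in> e \<longrightarrow> e \<in> two_edges V E F)"
proof (intro ballI impI)
  fix u e
  assume uS: "u \<in> V - F" and lf: "leaf B (Inr u)" and eB: "e \<in> B" and ue: "Inr u \<in> e"
  define HV where "HV = H_verts V E F"
  have FV: "F \<subseteq> V" and fF: "forest F E"
    and mx: "\<And>F'. F' \<subseteq> V \<Longrightarrow> forest F' E \<Longrightarrow> card F' \<le> card F"
    using assms(6) unfolding max_induced_forest_def by auto
  have finF: "finite F" using FV assms(1) finite_subset by blast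
  have sk: "r \<in> Inl ` components F E" "B \<subseteq> H_edges V E F"
    "is_tree HV (\<lambda>x y. {x, y} \<in> B)"
    using assms(7) unfolding skeleton_def HV_def by auto
  have compfin: "finite (components F E)"
  proof -
    have "components F E \<subseteq> Pow F" unfolding components_def by auto
    then show ?thesis using finF finite_subset by blast
  qed
  have finHV: "finite HV" unfolding HV_def H_verts_def using compfin assms(1) by simp
  have Hsub: "x \<subseteq> HV" if "x \<in> H_edges V E F" for x
    using that unfolding H_edges_def HV_def H_verts_def by auto
  have finB: "finite B"
  proof -
    have "B \<subseteq> Pow HV" using sk(2) Hsub by blast
    then show ?thesis using finHV finite_subset by blast
  qed
  obtain x0 where x0: "{e \<in> B. Inr u \<in> e} = {x0}"
    using lf unfolding leaf_def by (meson card_1_singletonE)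
  have uniq: "e' = e" if "e' \<in> B" "Inr u \<in> e'" for e'
  proof -
    have "e' \<in> {e \<in> B. Inr u \<in> e}" using that by simp
    then have "e' = x0" using x0 by simp
    moreover have "e \<in> {e \<in> B. Inr u \<in> e}" using eB ue by simp
    then have "e = x0" using x0 by simp
    ultimately show ?thesis by simp
  qed
  have uHV: "Inr u \<in> HV" using uS unfolding HV_def H_verts_def by auto
  obtain w where w: "e = {Inr u, w}" "w \<noteq> Inr u" "w \<in> HV"
  proof -
    have eH: "e \<in> H_edges V E F" using eB sk(2) by blast
    then have "e \<subseteq> HV" using Hsub by blast
    moreover obtain p q where pq: "e = {p, q}" "p \<noteq> q"
      using eH assms(4) unfolding H_edges_def by auto (metis sum.inject(2))
    ultimately have pqH: "p \<in> HV" "q \<in> HV" by auto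
    show ?thesis
    proof (cases "p = Inr u")
      case True
      then show ?thesis using that[of q] pq pqH by auto
    next
      case False
      then have "q = Inr u" using ue pq by auto
      then show ?thesis using that[of p] pq pqH by (auto simp: insert_commute)
    qed
  qed
  show "e \<in> two_edges V E F"
  proof (rule ccontr)
    assume ne: "e \<notin> two_edges V E F"
    have "\<not> forest (insert u F) E"
    proof
      assume "forest (insert u F) E"
      then have "card (insert u F) \<le> card F" using mx FV uS by auto
      then show False using finF uS by simp
    qed
    then obtain cs where cs: "length cs \<ge> 3" "distinct cs" "set cs \<subseteq> insert u F"
      "\<forall>i < length cs. E (cs ! i) (cs ! ((i + 1) mod length cs))"
      unfolding forest_def has_cycle_def by blast
    define n where "n = length cs"
    have "u \<in> set cs"
    proof (rule ccontr)
      assume "u \<notin> set cs"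
      then have "set cs \<subseteq> F" using cs(3) by blast
      then have "has_cycle F E" unfolding has_cycle_def using cs by blast
      then show False using fF unfolding forest_def by blast
    qed
    then obtain i where i: "i < n" "cs ! i = u" by (auto simp: in_set_conv_nth n_def)
    have n3: "3 \<le> n" using cs n_def by simp
    note ix = cyc_idx[OF n3 i(1)]
    define a where "a = cs ! ((i+1) mod n)"
    define b where "b = cs ! ((i+n-1) mod n)"
    have d: "cs ! p \<noteq> cs ! q" if "p < n" "q < n" "p \<noteq> q" for p q
      using that cs(2) nth_eq_iff_index_eq[OF cs(2), of p q] n_def by auto
    have "a \<noteq> u" using d[of "(i+1) mod n" i] ix i unfolding a_def by auto
    moreover have "a \<in> set cs" unfolding a_def using ix(6) n_def by simp
    ultimately have aF: "a \<in> F" using cs(3) by blast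
    have "b \<noteq> u" using d[of "(i+n-1) mod n" i] ix i unfolding b_def by auto
    moreover have "b \<in> set cs" unfolding b_def using ix(5) n_def by simp
    ultimately have bF: "b \<in> F" using cs(3) by blast
    have ab: "a \<noteq> b" using d[OF ix(6) ix(5) ix(1)] unfolding a_def b_def .
    have Eua: "E u a" using cs(4) i n_def unfolding a_def by auto
    have "E b (cs ! (((i+n-1) mod n + 1) mod n))" using cs(4) ix(5) n_def unfolding b_def by auto
    then have Eub: "E u b" using ix(4) i assms(3) by auto
    have path: "(restr F E)\<^sup>*\<^sup>* a b"
      unfolding a_def b_def using cyc_path[OF cs(2) n_def[symmetric] n3 i cs(4)[folded n_def] cs(3)] .
    define T where "T = {y \<in> F. (restr F E)\<^sup>*\<^sup>* a y}"
    have Tc: "T \<in> components F E" unfolding components_def T_def using aF by blast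
    have aT: "a \<in> T" and bT: "b \<in> T" unfolding T_def using aF bF path by auto
    have finT: "finite T" unfolding T_def using finF by simp
    have "{a, b} \<subseteq> {x \<in> T. E u x}" using aT bT Eua Eub by auto
    then have "card {a, b} \<le> card {x \<in> T. E u x}" using finT by (intro card_mono) auto
    then have c2: "card {x \<in> T. E u x} \<ge> 2" using ab by simp
    define f where "f = {Inr u, Inl T}"
    have f2: "f \<in> two_edges V E F" unfolding two_edges_def f_def using uS Tc c2 by blast
    have fH: "f \<in> H_edges V E F" unfolding H_edges_def f_def using uS Tc aT Eua by blast
    have THV: "Inl T \<in> HV" unfolding HV_def H_verts_def using Tc by auto
    define B' where "B' = insert f (B - {e})"
    have "is_tree HV (\<lambda>x y. {x, y} \<in> B')"
      unfolding B'_def f_def w(1)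
      by (rule tree_swap[OF sk(3) uHV w(3) w(2) THV]) (auto dest: uniq simp: w(1))
    then have "skeleton V E F r B'"
      unfolding skeleton_def HV_def using sk(1,2) fH unfolding B'_def by auto
    then have le: "card (B' \<inter> two_edges V E F) \<le> card (B \<inter> two_edges V E F)"
      by (rule assms(8))
    have fB: "f \<notin> B" using uniq[of f] f2 ne unfolding f_def by auto
    have "B' \<inter> two_edges V E F = insert f (B \<inter> two_edges V E F)"
      unfolding B'_def using f2 ne by auto
    then have "card (B' \<inter> two_edges V E F) = Suc (card (B \<inter> two_edges V E F))"
      using fB finB by simp
    then show False using le by simp
  qed
qed

end
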